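(* Let $\phi\colon\mathbb{R}\to\mathbb{R}$ be an increasing homeomorphism with $\phi(0)=0$, let $f\colon\mathbb{R}\to\mathbb{R}$ be continuous and let $h\colon[0,T]\times\mathbb{R}\to\mathbb{R}$ be a Carathéodory function. For $\lambda\in\,]0,1]$ consider $$(\phi(u'))'+\lambda f(u)u'+\lambda h(t,u)=0. \qquad (\ast_\lambda)$$ If there exists $d_1>0$ such that $\int_0^T h(t,u(t))\,dt\neq 0$ for each $u\in\mathcal{C}^1_T$ with $u(t)\ge d_1$ for all $t\in[0,T]$, then every $T$-periodic solution $u$ of $(\ast_\lambda)$ with $\lambda\in\,]0,1]$ satisfies $\min u<d_1$. If there exists $d_2>0$ such that $\int_0^T h(t,u(t))\,dt\neq 0$ for each $u\in\mathcal{C}^1_T$ with $u(t)\le -d_2$ for all $t\in[0,T]$, then every $T$-periodic solution $u$ of $(\ast_\lambda)$ with $\lambda\in\,]0,1]$ satisfies $\max u>-d_2$.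
   Context: $\mathcal{C}^1_T=\{u\in\mathcal{C}^1([0,T]):u(0)=u(T),\,u'(0)=u'(T)\}$. A $T$-periodic solution is a $u\in\mathcal{C}^1_T$ with $\phi(u')$ absolutely continuous satisfying the equation a.e. A Carathéodory function is measurable in $t$, continuous in $u$, and for each $r>0$ bounded in absolute value on $[0,T]\times[-r,r]$ by an $L^1$ function of $t$. *)

theory Defs
  imports "HOL-Analysis.Analysis"
begin

definition incr_homeo :: "(real \<Rightarrow> real) \<Rightarrow> bool" where
  "incr_homeo \<phi> \<longleftrightarrow> mono \<phi> \<and> (\<exists>\<psi>. homeomorphism UNIV UNIV \<phi> \<psi>)"

definition caratheodory :: "real \<Rightarrow> (real \<Rightarrow> real \<Rightarrow> real) \<Rightarrow> bool" where
  "caratheodory T h \<longleftrightarrow>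
     (\<forall>x. (\<lambda>t. h t x) \<in> borel_measurable (lebesgue_on {0..T})) \<and>
     (\<forall>t\<in>{0..T}. continuous_on UNIV (h t)) \<and>
     (\<forall>r>0. \<exists>g. g integrable_on {0..T} \<and>
        (\<forall>t\<in>{0..T}. \<forall>x. \<bar>x\<bar> \<le> r \<longrightarrow> \<bar>h t x\<bar> \<le> g t))"

definition abs_cont_on :: "real \<Rightarrow> real \<Rightarrow> (real \<Rightarrow> real) \<Rightarrow> bool" where
  "abs_cont_on a b g \<longleftrightarrow>
    (\<forall>\<epsilon>>0. \<exists>\<delta>>0. \<forall>(n::nat) (l::nat \<Rightarrow> real) (r::nat \<Rightarrow> real).
       (\<forall>i<n. a \<le> l i \<and> l i \<le> r i \<and> r i \<le> b) \<and>
       (\<forall>i<n. \<forall>j<n. i \<noteq> j \<longrightarrow> {l i<..<r i} \<inter> {l j<..<r j} = {}) \<and>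
       (\<Sum>i<n. r i - l i) < \<delta>
       \<longrightarrow> (\<Sum>i<n. \<bar>g (r i) - g (l i)\<bar>) < \<epsilon>)"

definition C1T :: "real \<Rightarrow> (real \<Rightarrow> real) \<Rightarrow> (real \<Rightarrow> real) \<Rightarrow> bool" where
  "C1T T u u' \<longleftrightarrow>
     (\<forall>t\<in>{0..T}. (u has_real_derivative u' t) (at t within {0..T})) \<and>
     continuous_on {0..T} u' \<and> u 0 = u T \<and> u' 0 = u' T"

definition in_C1T :: "real \<Rightarrow> (real \<Rightarrow> real) \<Rightarrow> bool" where
  "in_C1T T u \<longleftrightarrow> (\<exists>u'. C1T T u u')"

definition periodic_solution ::
  "real \<Rightarrow> (real \<Rightarrow> real) \<Rightarrow> (real \<Rightarrow> real) \<Rightarrow> (real \<Rightarrow> real \<Rightarrow> real) \<Rightarrow> real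
    \<Rightarrow> (real \<Rightarrow> real) \<Rightarrow> bool" where
  "periodic_solution T \<phi> f h lam u \<longleftrightarrow>
     (\<exists>u'. C1T T u u' \<and> abs_cont_on 0 T (\<lambda>t. \<phi> (u' t)) \<and>
        (AE t in lebesgue_on {0..T}.
           ((\<lambda>s. \<phi> (u' s)) has_real_derivative
              (- lam * f (u t) * u' t - lam * h t (u t))) (at t within {0..T})))"

end

theory Submission
  imports Defs
begin


lemma sum_content_le_measure:
  fixes q :: "(real \<times> real set) set"
  assumes q: "q tagged_partial_division_of S" and W: "W \<in> lmeasurable"
    and sub: "\<And>x K. (x,K) \<in> q \<Longrightarrow> K \<subseteq> W"
  shows "(\<Sum>(x,K)\<in>q. measure lborel K) \<le> measure lebesgue W"
proof -
  have td: "q tagged_division_of (\<Union>(snd ` q))"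
    by (rule tagged_partial_division_of_Union_self[OF q])
  have div: "(snd ` q) division_of (\<Union>(snd ` q))"
    by (rule division_of_tagged_division[OF td])
  have "(\<Sum>(x,K)\<in>q. measure lborel K) = sum (\<lambda>K. measure lborel K) (snd ` q)"
    by (rule sum.over_tagged_division_lemma[OF td]) (simp add: content_eq_0_interior)
  also have "\<dots> = (\<Sum>K\<in>snd ` q. measure lebesgue K)"
  proof (rule sum.cong[OF refl])
    fix K assume "K \<in> snd ` q"
    then obtain u v where "K = cbox u v" using div by (meson division_ofD(4))
    then show "measure lborel K = measure lebesgue K" by simp
  qed
  also have "\<dots> = measure lebesgue (\<Union>(snd ` q))"
    by (rule content_division[OF div])
  also have "\<dots> \<le> measure lebesgue W"
    proof (rule measure_mono_fmeasurable)
    show "\<Union>(snd ` q) \<subseteq> W" using sub by force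
  qed (use lmeasurable_division[OF div] W in auto)
  finally show ?thesis .
qed

lemma pdiv_interval:
  fixes q :: "(real \<times> real set) set"
  assumes q: "q tagged_partial_division_of {a..b}" and xK: "(x,K) \<in> q"
  shows "a \<le> Inf K \<and> Inf K \<le> Sup K \<and> Sup K \<le> b \<and> K = {Inf K..Sup K}
     \<and> measure lborel K = Sup K - Inf K \<and> x \<in> K"
proof -
  from tagged_partial_division_ofD[OF q] xK
  obtain u v where K: "K = cbox u v" and xin: "x \<in> K" and sub: "K \<subseteq> {a..b}" by metis
  then have uv: "u \<le> v" by auto
  have "Inf K = u" "Sup K = v" using uv K by auto
  then show ?thesis using K uv sub xin by auto
qed

lemma ac_sum:
  assumes ac: "abs_cont_on a b g" and e: "e > 0"
  obtains d where "d > 0" "\<And>q. q tagged_partial_division_of {a..b} \<Longrightarrow>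
      (\<Sum>(x,K)\<in>q. measure lborel K) < d \<Longrightarrow> (\<Sum>(x,K)\<in>q. \<bar>g (Sup K) - g (Inf K)\<bar>) < e"
proof -
  obtain d where d: "d > 0" and dd: "\<And>(n::nat) (l::nat \<Rightarrow> real) (r::nat \<Rightarrow> real).
       (\<forall>i<n. a \<le> l i \<and> l i \<le> r i \<and> r i \<le> b) \<Longrightarrow>
       (\<forall>i<n. \<forall>j<n. i \<noteq> j \<longrightarrow> {l i<..<r i} \<inter> {l j<..<r j} = {}) \<Longrightarrow>
       (\<Sum>i<n. r i - l i) < d
       \<Longrightarrow> (\<Sum>i<n. \<bar>g (r i) - g (l i)\<bar>) < e"
    using ac e unfolding abs_cont_on_def by meson
  show ?thesis
  proof (rule that[OF d])
    fix q :: "(real \<times> real set) set"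
    assume q: "q tagged_partial_division_of {a..b}" and sm: "(\<Sum>(x,K)\<in>q. measure lborel K) < d"
    have fin: "finite q" using q by (rule tagged_partial_division_ofD(1))
    obtain h where h: "bij_betw h {0..<card q} q" using ex_bij_betw_nat_finite[OF fin] by blast
    define n where "n = card q"
    define l where "l i = Inf (snd (h i))" for i
    define r where "r i = Sup (snd (h i))" for i
    have hin: "h i \<in> q" if "i < n" for i using h that unfolding n_def bij_betw_def by auto
    have P: "a \<le> l i \<and> l i \<le> r i \<and> r i \<le> b \<and> snd (h i) = {l i..r i}
       \<and> measure lborel (snd (h i)) = r i - l i" if "i < n" for i
      using pdiv_interval[OF q, of "fst (h i)" "snd (h i)"] hin[OF that] unfolding l_def r_def by auto
    have "\<forall>i<n. \<forall>j<n. i \<noteq> j \<longrightarrow> {l i<..<r i} \<inter> {l j<..<r j} = {}"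
    proof (intro allI impI)
      fix i j assume ij: "i < n" "j < n" "i \<noteq> j"
      have "h i \<noteq> h j" using h ij unfolding bij_betw_def inj_on_def n_def by auto
      then have "interior (snd (h i)) \<inter> interior (snd (h j)) = {}"
        using tagged_partial_division_ofD(5)[OF q, of "fst (h i)" "snd (h i)" "fst (h j)" "snd (h j)"]
          hin ij by auto
      then show "{l i<..<r i} \<inter> {l j<..<r j} = {}" using P[OF ij(1)] P[OF ij(2)] by simp
    qed
    moreover have eq1: "(\<Sum>i<n. r i - l i) = (\<Sum>(x,K)\<in>q. measure lborel K)"
    proof -
      have "(\<Sum>i<n. r i - l i) = (\<Sum>i<n. (\<lambda>(x,K). measure lborel K) (h i))"
        by (rule sum.cong[OF refl]) (use P in \<open>auto simp: split_beta\<close>)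
      also have "\<dots> = (\<Sum>(x,K)\<in>q. measure lborel K)"
        using sum.reindex_bij_betw[OF h] unfolding n_def atLeast0LessThan by simp
      finally show ?thesis .
    qed
    moreover have eq2: "(\<Sum>i<n. \<bar>g (r i) - g (l i)\<bar>) = (\<Sum>(x,K)\<in>q. \<bar>g (Sup K) - g (Inf K)\<bar>)"
    proof -
      have "(\<Sum>i<n. \<bar>g (r i) - g (l i)\<bar>) = (\<Sum>i<n. (\<lambda>(x,K). \<bar>g (Sup K) - g (Inf K)\<bar>) (h i))"
        by (rule sum.cong[OF refl]) (auto simp: split_beta l_def r_def)
      also have "\<dots> = (\<Sum>(x,K)\<in>q. \<bar>g (Sup K) - g (Inf K)\<bar>)"
        using sum.reindex_bij_betw[OF h] unfolding n_def atLeast0LessThan by simp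
      finally show ?thesis .
    qed
    ultimately show "(\<Sum>(x,K)\<in>q. \<bar>g (Sup K) - g (Inf K)\<bar>) < e"
      using dd[of n l r] P sm by auto
  qed
qed

lemma ftc_ac:
  fixes g k :: "real \<Rightarrow> real"
  assumes ab: "a \<le> b" and ac: "abs_cont_on a b g" and E: "negligible E"
    and der: "\<And>x. x \<in> {a..b} - E \<Longrightarrow> (g has_real_derivative k x) (at x within {a..b})"
  shows "(k has_integral (g b - g a)) {a..b}"
proof -
  define k' where "k' x = (if x \<in> E then 0 else k x)" for x
  have "(k' has_integral (g b - g a)) (cbox a b)"
    unfolding has_integral
  proof (intro allI impI)
    fix e :: real assume e: "e > 0"
    obtain \<delta> where \<delta>: "\<delta> > 0" and acs: "\<And>q. q tagged_partial_division_of {a..b} \<Longrightarrow>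
      (\<Sum>(x,K)\<in>q. measure lborel K) < \<delta> \<Longrightarrow> (\<Sum>(x,K)\<in>q. \<bar>g (Sup K) - g (Inf K)\<bar>) < e/2"
      using ac_sum[OF ac, of "e/2"] e by auto
    have Eleb: "E \<in> sets lebesgue" using E negligible_imp_sets by blast
    obtain W where W: "open W" "E \<subseteq> W" "(W - E) \<in> lmeasurable" "emeasure lebesgue (W - E) < ennreal \<delta>"
      using sets_lebesgue_outer_open[OF Eleb \<delta>] by blast
    have WE: "W = (W - E) \<union> E" using W(2) by blast
    have Em: "E \<in> lmeasurable" using E negligible_imp_measurable by blast
    have Wm: "W \<in> lmeasurable" using fmeasurable.Un[OF W(3) Em] WE by simp
    have m1: "measure lebesgue (W - E) < \<delta>"
      using W(3,4) by (metis emeasure_eq_measure2 ennreal_less_iff measure_nonneg)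
    have m2: "measure lebesgue E = 0" using E negligible_imp_measure0 by blast
    have Wlt: "measure lebesgue W < \<delta>"
      using measure_Un_le[of "W - E" lebesgue E] W(3) Eleb m1 m2 WE by (auto simp: fmeasurable_def)
    define \<eta> where "\<eta> = e / (2 * (b - a + 1))"
    have \<eta>: "\<eta> > 0" using e ab unfolding \<eta>_def by auto
    have "\<forall>x\<in>E. \<exists>r>0. ball x r \<subseteq> W" using W(1,2) open_contains_ball by blast
    then obtain dW where dW: "\<And>x. x \<in> E \<Longrightarrow> dW x > 0 \<and> ball x (dW x) \<subseteq> W" by metis
    have "\<forall>x\<in>{a..b}-E. \<exists>r>0. \<forall>y\<in>{a..b}. norm (y - x) < r \<longrightarrow>
         norm (g y - g x - k x * (y - x)) \<le> \<eta> * norm (y - x)"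
      using der \<eta> unfolding has_field_derivative_def has_derivative_within_alt by blast
    then obtain dD where dD: "\<And>x. x \<in> {a..b}-E \<Longrightarrow> dD x > 0 \<and> (\<forall>y\<in>{a..b}. norm (y - x) < dD x \<longrightarrow>
         norm (g y - g x - k x * (y - x)) \<le> \<eta> * norm (y - x))" by metis
    define d where "d x = (if x \<in> E then dW x else if x \<in> {a..b} then dD x else 1)" for x
    have dpos: "\<forall>x. d x > 0" using dW dD unfolding d_def by auto
    show "\<exists>\<gamma>. gauge \<gamma> \<and> (\<forall>\<D>. \<D> tagged_division_of cbox a b \<and> \<gamma> fine \<D> \<longrightarrow>
        norm ((\<Sum>(x, K)\<in>\<D>. measure lborel K *\<^sub>R k' x) - (g b - g a)) < e)"
    proof (intro exI conjI allI impI)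
      show "gauge (\<lambda>x. ball x (d x))" using gauge_ball_dependent[OF dpos] .
      fix p assume pp: "p tagged_division_of cbox a b \<and> (\<lambda>x. ball x (d x)) fine p"
      then have ptag: "p tagged_division_of {a..b}" and finep: "(\<lambda>x. ball x (d x)) fine p" by auto
      have ppart: "p tagged_partial_division_of {a..b}" using ptag unfolding tagged_division_of_def by blast
      have fin: "finite p" using ptag by blast
      define pE where "pE = {xK \<in> p. fst xK \<in> E}"
      define pN where "pN = p - pE"
      have pEsub: "pE \<subseteq> p" unfolding pE_def by auto
      define F where "F = (\<lambda>(x::real, K::real set). measure lborel K * k' x - (g (Sup K) - g (Inf K)))"
      have ba: "g b - g a = (\<Sum>(x,K)\<in>p. g (Sup K) - g (Inf K))"
        using additive_tagged_division_1[OF ab ptag, of g] by simp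
      have diff: "(\<Sum>(x, K)\<in>p. measure lborel K *\<^sub>R k' x) - (g b - g a) = sum F p"
        unfolding ba F_def by (simp add: split_def sum_subtractf)
      have spl: "sum F p = sum F pN + sum F pE"
        unfolding pN_def using sum.subset_diff[OF pEsub fin] by simp
      have bE: "\<bar>sum F pE\<bar> < e/2"
      proof -
        have pEpart: "pE tagged_partial_division_of {a..b}"
          using tagged_partial_division_subset[OF ppart pEsub] .
        have subW: "K \<subseteq> W" if "(x,K) \<in> pE" for x K
        proof -
          have "x \<in> E" "(x,K) \<in> p" using that unfolding pE_def by auto
          then have "K \<subseteq> ball x (d x)" using finep unfolding fine_def by auto
          then show ?thesis using dW[OF \<open>x \<in> E\<close>] \<open>x \<in> E\<close> unfolding d_def by auto
        qed
        have "(\<Sum>(x,K)\<in>pE. measure lborel K) \<le> measure lebesgue W"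
          by (rule sum_content_le_measure[OF pEpart Wm subW])
        then have lt: "(\<Sum>(x,K)\<in>pE. \<bar>g (Sup K) - g (Inf K)\<bar>) < e/2"
          using acs[OF pEpart] Wlt by linarith
        have "\<bar>sum F pE\<bar> \<le> (\<Sum>xK\<in>pE. \<bar>F xK\<bar>)" by (rule sum_abs)
        also have "\<dots> = (\<Sum>(x,K)\<in>pE. \<bar>g (Sup K) - g (Inf K)\<bar>)"
          by (rule sum.cong[OF refl]) (auto simp: F_def k'_def pE_def)
        finally have "\<bar>sum F pE\<bar> \<le> (\<Sum>(x,K)\<in>pE. \<bar>g (Sup K) - g (Inf K)\<bar>)" .
        then show ?thesis using lt by linarith
      qed
      have bN: "\<bar>sum F pN\<bar> < e/2"
      proof -
        have tm: "\<bar>F (x,K)\<bar> \<le> \<eta> * (Sup K - Inf K)" if xK: "(x,K) \<in> pN" for x K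
        proof -
          have xp: "(x,K) \<in> p" and xE: "x \<notin> E" using xK unfolding pN_def pE_def by auto
          have I: "a \<le> Inf K \<and> Inf K \<le> Sup K \<and> Sup K \<le> b \<and> K = {Inf K..Sup K}
            \<and> measure lborel K = Sup K - Inf K \<and> x \<in> K" using pdiv_interval[OF ppart xp] .
          define u where "u = Inf K"
          define v where "v = Sup K"
          have xI: "x \<in> {Inf K..Sup K}" using I by metis
          have I1: "a \<le> Inf K" "Sup K \<le> b" using I by auto
          have xab: "x \<in> {a..b} - E" using xI xE I1 by auto
          have dx: "d x = dD x" using xab unfolding d_def by auto
          have "K \<subseteq> ball x (d x)" using finep xp unfolding fine_def by auto
          then have ball: "K \<subseteq> ball x (dD x)" using dx by simp
          have uK: "u \<in> K" "v \<in> K" using I unfolding u_def v_def by auto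
          have cu: "norm (g u - g x - k x * (u - x)) \<le> \<eta> * norm (u - x)"
            using dD[OF xab] uK ball I unfolding u_def by (auto simp: dist_real_def)
          have cv: "norm (g v - g x - k x * (v - x)) \<le> \<eta> * norm (v - x)"
            using dD[OF xab] uK ball I unfolding v_def by (auto simp: dist_real_def)
          have Fx: "F (x,K) = (v - u) * k x - (g v - g u)"
            using I xE unfolding F_def k'_def u_def v_def by simp
          have "\<bar>F (x,K)\<bar> \<le> \<eta> * \<bar>u - x\<bar> + \<eta> * \<bar>v - x\<bar>"
          proof -
            have "F (x,K) = (g u - g x - k x * (u - x)) - (g v - g x - k x * (v - x))"
              unfolding Fx by (simp add: algebra_simps)
            moreover have "\<bar>g u - g x - k x * (u - x)\<bar> \<le> \<eta> * \<bar>u - x\<bar>" using cu by simp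
            moreover have "\<bar>g v - g x - k x * (v - x)\<bar> \<le> \<eta> * \<bar>v - x\<bar>" using cv by simp
            ultimately show ?thesis by linarith
          qed
          also have "\<dots> = \<eta> * (v - u)"
          proof -
            have "\<bar>u - x\<bar> = x - u" "\<bar>v - x\<bar> = v - x" using xI unfolding u_def v_def by auto
            then show ?thesis by (simp add: algebra_simps)
          qed
          finally show ?thesis unfolding u_def v_def .
        qed
        have "\<bar>sum F pN\<bar> \<le> (\<Sum>xK\<in>pN. \<bar>F xK\<bar>)" by (rule sum_abs)
        also have "\<dots> \<le> (\<Sum>(x,K)\<in>pN. \<eta> * (Sup K - Inf K))"
          by (rule sum_mono) (use tm in auto)
        also have "\<dots> \<le> (\<Sum>(x,K)\<in>p. \<eta> * (Sup K - Inf K))"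
        proof (rule sum_mono2[OF fin])
          show "pN \<subseteq> p" unfolding pN_def by auto
          show "0 \<le> (case xK of (x, K) \<Rightarrow> \<eta> * (Sup K - Inf K))" if "xK \<in> p - pN" for xK
            using that pdiv_interval[OF ppart, of "fst xK" "snd xK"] \<eta> by (auto simp: split_def)
        qed
        also have "\<dots> = \<eta> * (b - a)"
          using additive_tagged_division_1[OF ab ptag, of "\<lambda>x. x"]
          by (simp add: split_def sum_distrib_left[symmetric])
        also have "\<dots> < e/2" using e ab unfolding \<eta>_def by (simp add: field_simps)
        finally show ?thesis .
      qed
      show "norm ((\<Sum>(x, K)\<in>p. measure lborel K *\<^sub>R k' x) - (g b - g a)) < e"
        unfolding diff spl using bE bN by simp
    qed
  qed
  then have "(k' has_integral (g b - g a)) {a..b}" by simp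
  then show ?thesis
    by (rule has_integral_spike[OF E, rotated]) (simp add: k'_def)
qed



lemma sol_integral_zero:
  fixes T lam :: real and \<phi> f :: "real \<Rightarrow> real" and h :: "real \<Rightarrow> real \<Rightarrow> real"
  assumes T: "T > 0" and lam: "lam > 0" and f: "continuous_on UNIV f"
    and sol: "periodic_solution T \<phi> f h lam u"
  shows "integral {0..T} (\<lambda>t. h t (u t)) = 0 \<and> in_C1T T u \<and> continuous_on {0..T} u"
proof -
  obtain u' where c1: "C1T T u u'" and ac: "abs_cont_on 0 T (\<lambda>t. \<phi> (u' t))"
    and ae: "AE t in lebesgue_on {0..T}.
           ((\<lambda>s. \<phi> (u' s)) has_real_derivative
              (- lam * f (u t) * u' t - lam * h t (u t))) (at t within {0..T})"
    using sol unfolding periodic_solution_def by blast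
  have du: "\<And>t. t \<in> {0..T} \<Longrightarrow> (u has_real_derivative u' t) (at t within {0..T})"
    and cu': "continuous_on {0..T} u'" and per: "u 0 = u T" "u' 0 = u' T"
    using c1 unfolding C1T_def by auto
  have inC: "in_C1T T u" using c1 unfolding in_C1T_def by blast
  have cu: "continuous_on {0..T} u"
    unfolding continuous_on_eq_continuous_within using du DERIV_continuous by blast
  define k where "k t = - lam * f (u t) * u' t - lam * h t (u t)" for t
  have "AE t in lebesgue. t \<in> {0..T} \<longrightarrow>
      ((\<lambda>s. \<phi> (u' s)) has_real_derivative k t) (at t within {0..T})"
    using ae unfolding k_def by (subst (asm) AE_restrict_space_iff) auto
  then obtain N where N: "negligible N" and NN: "{t. \<not> (t \<in> {0..T} \<longrightarrow>
      ((\<lambda>s. \<phi> (u' s)) has_real_derivative k t) (at t within {0..T}))} \<subseteq> N"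
    unfolding eventually_ae_filter_negligible by blast
  have ik: "(k has_integral (\<phi> (u' T) - \<phi> (u' 0))) {0..T}"
    by (rule ftc_ac[OF _ ac N]) (use T NN in auto)
  then have ik0: "(k has_integral 0) {0..T}" using per by simp
  have "compact (u ` {0..T})" using compact_continuous_image[OF cu] by simp
  then obtain B where B: "\<And>x. x \<in> u ` {0..T} \<Longrightarrow> \<bar>x\<bar> \<le> B"
    using compact_imp_bounded bounded_real by metis
  define F where "F x = integral {-B..x} f" for x
  have dF: "(F \<circ> u has_real_derivative f (u t) * u' t) (at t within {0..T})" if t: "t \<in> {0..T}" for t
  proof (rule DERIV_image_chain)
    have "u t \<in> {-B..B}" using B[of "u t"] t by auto
    then have "(F has_real_derivative f (u t)) (at (u t) within {-B..B})"
      unfolding F_def by (rule integral_has_real_derivative[OF continuous_on_subset[OF f subset_UNIV]])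
    moreover have "u ` {0..T} \<subseteq> {-B..B}" using B by force
    ultimately show "(F has_real_derivative f (u t)) (at (u t) within u ` {0..T})"
      by (rule has_field_derivative_subset)
    show "(u has_real_derivative u' t) (at t within {0..T})" using du t .
  qed
  have "((\<lambda>t. f (u t) * u' t) has_integral ((F \<circ> u) T - (F \<circ> u) 0)) {0..T}"
    by (rule fundamental_theorem_of_calculus) (use T dF in \<open>auto simp: has_real_derivative_iff_has_vector_derivative o_def\<close>)
  then have if0: "((\<lambda>t. f (u t) * u' t) has_integral 0) {0..T}" using per by simp
  have "((\<lambda>t. - (k t + lam * (f (u t) * u' t)) / lam) has_integral (- (0 + lam * 0) / lam)) {0..T}"
    by (intro has_integral_divide has_integral_neg has_integral_add ik0 has_integral_mult_right if0)
  moreover have "(\<lambda>t. - (k t + lam * (f (u t) * u' t)) / lam) = (\<lambda>t. h t (u t))"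
    using lam by (auto simp: k_def field_simps)
  ultimately have "((\<lambda>t. h t (u t)) has_integral 0) {0..T}" by simp
  then show ?thesis using inC cu by (simp add: integral_unique)
qed


theorem lemma2p3:
  fixes T :: real and \<phi> f :: "real \<Rightarrow> real" and h :: "real \<Rightarrow> real \<Rightarrow> real"
    and d1 d2 :: real
  assumes T: "T > 0"
    and phi: "incr_homeo \<phi>" "\<phi> 0 = 0"
    and f: "continuous_on UNIV f"
    and h: "caratheodory T h"
  shows "((d1 > 0 \<and> (\<forall>u. in_C1T T u \<and> (\<forall>t\<in>{0..T}. u t \<ge> d1)
                   \<longrightarrow> integral {0..T} (\<lambda>t. h t (u t)) \<noteq> 0))
         \<longrightarrow> (\<forall>lam u. 0 < lam \<and> lam \<le> 1 \<and> periodic_solution T \<phi> f h lam u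
                   \<longrightarrow> Inf (u ` {0..T}) < d1)) \<and>
         ((d2 > 0 \<and> (\<forall>u. in_C1T T u \<and> (\<forall>t\<in>{0..T}. u t \<le> - d2)
                   \<longrightarrow> integral {0..T} (\<lambda>t. h t (u t)) \<noteq> 0))
         \<longrightarrow> (\<forall>lam u. 0 < lam \<and> lam \<le> 1 \<and> periodic_solution T \<phi> f h lam u
                   \<longrightarrow> Sup (u ` {0..T}) > - d2))"
proof (intro conjI impI allI)
  fix lam u
  assume H: "d1 > 0 \<and> (\<forall>u. in_C1T T u \<and> (\<forall>t\<in>{0..T}. u t \<ge> d1)
                   \<longrightarrow> integral {0..T} (\<lambda>t. h t (u t)) \<noteq> 0)"
    and S: "0 < lam \<and> lam \<le> 1 \<and> periodic_solution T \<phi> f h lam u"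
  have Z: "integral {0..T} (\<lambda>t. h t (u t)) = 0" and inC: "in_C1T T u" and cu: "continuous_on {0..T} u"
    using sol_integral_zero[OF T _ f, of lam \<phi> h u] S by auto
  have "compact (u ` {0..T})" using compact_continuous_image[OF cu] by simp
  then have bdd: "bdd_below (u ` {0..T})" by (simp add: bounded_imp_bdd_below compact_imp_bounded)
  show "Inf (u ` {0..T}) < d1"
  proof (rule ccontr)
    assume "\<not> Inf (u ` {0..T}) < d1"
    then have "\<forall>t\<in>{0..T}. u t \<ge> d1"
      using cInf_lower[OF _ bdd] by (meson imageI not_less order_trans)
    then show False using H inC Z by blast
  qed
next
  fix lam u
  assume H: "d2 > 0 \<and> (\<forall>u. in_C1T T u \<and> (\<forall>t\<in>{0..T}. u t \<le> - d2)
                   \<longrightarrow> integral {0..T} (\<lambda>t. h t (u t)) \<noteq> 0)"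
    and S: "0 < lam \<and> lam \<le> 1 \<and> periodic_solution T \<phi> f h lam u"
  have Z: "integral {0..T} (\<lambda>t. h t (u t)) = 0" and inC: "in_C1T T u" and cu: "continuous_on {0..T} u"
    using sol_integral_zero[OF T _ f, of lam \<phi> h u] S by auto
  have "compact (u ` {0..T})" using compact_continuous_image[OF cu] by simp
  then have bdd: "bdd_above (u ` {0..T})" by (simp add: bounded_imp_bdd_above compact_imp_bounded)
  show "Sup (u ` {0..T}) > - d2"
  proof (rule ccontr)
    assume "\<not> Sup (u ` {0..T}) > - d2"
    then have "\<forall>t\<in>{0..T}. u t \<le> - d2"
      using cSup_upper[OF _ bdd] by (meson imageI not_less order_trans)
    then show False using H inC Z by blast
  qed
qed

end
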